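(* Let $G_1$ and $G_2$ be two disjoint $(k+1)$-critical hypergraphs with $k\ge2$, let $\tilde e\in E(G_1)$ and $\tilde v\in V(G_2)$ be arbitrary, and let $s$ be an admissible map for $(\tilde e,G_2,\tilde v)$. Let $G=S(G_1,\tilde e,G_2,\tilde v,s)$ and $G_2'=G[(V(G_2)\setminus\{\tilde v\})\cup\tilde e]$. Assume that for every $k$-coloring $\varphi$ of $G[\tilde e]$ with $|\varphi(\tilde e)|\ge2$ there is a $k$-coloring $\varphi'$ of $G_2'$ whose restriction to $\tilde e$ equals $\varphi$. Then $G$ is $(k+1)$-critical.
   Context: A hypergraph is a pair $G=(V,E)$ of finite sets with $E\subseteq 2^V$ and $|e|\ge2$ for all $e\in E$. A $k$-coloring is a map $V\to\{1,\dots,k\}$ such that every edge contains two vertices of different colors; $\chi$ is the chromatic number. $G$ is $(k+1)$-critical if $\chi(G)=k+1$ but $\chi(H)\le k$ for every proper subhypergraph $H$. $G[X]$ has vertex set $X$ and the edges of $G$ contained in $X$. $\partial_G(v)$ is the set of edges containing $v$. Splitting: let $G_1,G_2$ be disjoint hypergraphs, $\tilde e\in E(G_1)$, $\tilde v\in V(G_2)$, and $s:\partial_{G_2}(\tilde v)\to 2^{\tilde e}$ a map (called admissible) with $s(e)\ne\varnothing$ for all $e$ and $\bigcup_{e}s(e)=\tilde e$. Then $S(G_1,\tilde e,G_2,\tilde v,s)$ is the hypergraph with vertex set $V(G_1)\cup(V(G_2)\setminus\{\tilde v\})$ and edge set $(E(G_1)\setminus\{\tilde e\})\cup(E(G_2)\setminus\partial_{G_2}(\tilde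 v))\cup\{(e\setminus\{\tilde v\})\cup s(e): e\in\partial_{G_2}(\tilde v)\}$. *)

theory Defs
  imports Main
begin

type_synonym 'a hypergraph = "'a set \<times> 'a set set"

definition verts :: "'a hypergraph \<Rightarrow> 'a set" where "verts G = fst G"
definition edges :: "'a hypergraph \<Rightarrow> 'a set set" where "edges G = snd G"

definition hypergraph :: "'a hypergraph \<Rightarrow> bool" where
  "hypergraph G \<longleftrightarrow> finite (verts G) \<and> edges G \<subseteq> Pow (verts G)
     \<and> (\<forall>e\<in>edges G. 2 \<le> card e)"

definition is_coloring :: "'a hypergraph \<Rightarrow> nat \<Rightarrow> ('a \<Rightarrow> nat) \<Rightarrow> bool" where
  "is_coloring G k f \<longleftrightarrow> f ` verts G \<subseteq> {1..k}
     \<and> (\<forall>e\<in>edges G. \<exists>x\<in>e. \<exists>y\<in>e. f x \<noteq> f y)"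

definition chi :: "'a hypergraph \<Rightarrow> nat" where
  "chi G = (LEAST k. \<exists>f. is_coloring G k f)"

definition subhypergraph :: "'a hypergraph \<Rightarrow> 'a hypergraph \<Rightarrow> bool" where
  "subhypergraph H G \<longleftrightarrow> hypergraph H \<and> verts H \<subseteq> verts G \<and> edges H \<subseteq> edges G"

definition critical :: "nat \<Rightarrow> 'a hypergraph \<Rightarrow> bool" where
  "critical k G \<longleftrightarrow> hypergraph G \<and> chi G = k + 1
     \<and> (\<forall>H. subhypergraph H G \<and> H \<noteq> G \<longrightarrow> chi H \<le> k)"

definition induced :: "'a hypergraph \<Rightarrow> 'a set \<Rightarrow> 'a hypergraph" where
  "induced G X = (X, {e\<in>edges G. e \<subseteq> X})"

definition incident :: "'a hypergraph \<Rightarrow> 'a \<Rightarrow> 'a set set" where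
  "incident G v = {e\<in>edges G. v \<in> e}"

definition admissible :: "'a set \<Rightarrow> 'a hypergraph \<Rightarrow> 'a \<Rightarrow> ('a set \<Rightarrow> 'a set) \<Rightarrow> bool" where
  "admissible et G2 vt s \<longleftrightarrow>
     (\<forall>e\<in>incident G2 vt. s e \<noteq> {} \<and> s e \<subseteq> et)
     \<and> (\<Union>e\<in>incident G2 vt. s e) = et"

definition split_hg :: "'a hypergraph \<Rightarrow> 'a set \<Rightarrow> 'a hypergraph \<Rightarrow> 'a \<Rightarrow> ('a set \<Rightarrow> 'a set)
    \<Rightarrow> 'a hypergraph" where
  "split_hg G1 et G2 vt s =
     (verts G1 \<union> (verts G2 - {vt}),
      (edges G1 - {et}) \<union> (edges G2 - incident G2 vt)
        \<union> {(e - {vt}) \<union> s e | e. e \<in> incident G2 vt})"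

end

theory Submission
  imports Defs
begin

lemma verts_pair[simp]: "verts (a,b) = a" by (simp add: verts_def)
lemma edges_pair[simp]: "edges (a,b) = b" by (simp add: edges_def)
lemma hg_eta: "G = (verts G, edges G)" by (simp add: verts_def edges_def)

lemma two_elems: assumes "finite g" "2 \<le> card g" "x \<in> g" shows "\<exists>y\<in>g. y \<noteq> x"
proof (rule ccontr)
  assume "\<not> (\<exists>y\<in>g. y \<noteq> x)"
  then have "g \<subseteq> {x}" by blast
  then have "card g \<le> card {x}" by (intro card_mono) auto
  then show False using assms(2) by simp
qed

lemma col_mono: "is_coloring H n f \<Longrightarrow> n \<le> k \<Longrightarrow> is_coloring H k f"
  unfolding is_coloring_def by auto

lemma exists_col: assumes "hypergraph H" shows "\<exists>n f. is_coloring H n f"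
proof -
  have fin: "finite (verts H)" using assms unfolding hypergraph_def by auto
  obtain h where h: "bij_betw h (verts H) {0..<card (verts H)}"
    using ex_bij_betw_finite_nat[OF fin] by blast
  have "is_coloring H (card (verts H)) (\<lambda>x. h x + 1)"
    unfolding is_coloring_def
  proof (intro conjI ballI)
    show "(\<lambda>x. h x + 1) ` verts H \<subseteq> {1..card (verts H)}"
      using bij_betw_apply[OF h] by force
  next
    fix e assume e: "e \<in> edges H"
    then have "2 \<le> card e" "e \<subseteq> verts H" using assms unfolding hypergraph_def by auto
    then obtain x y where "x \<in> e" "y \<in> e" "x \<noteq> y"
      using card_le_Suc0_iff_eq[of e] \<open>e \<subseteq> verts H\<close> fin finite_subset by force
    moreover have "h x \<noteq> h y" using h \<open>x \<noteq> y\<close> \<open>x \<in> e\<close> \<open>y \<in> e\<close> \<open>e \<subseteq> verts H\<close>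
      by (auto simp: bij_betw_def inj_on_def)
    ultimately show "\<exists>x\<in>e. \<exists>y\<in>e. h x + 1 \<noteq> h y + 1" by auto
  qed
  then show ?thesis by blast
qed

lemma chi_le_col: assumes "hypergraph H" "chi H \<le> k" shows "\<exists>f. is_coloring H k f"
proof -
  obtain n f where "is_coloring H n f" using exists_col[OF assms(1)] by blast
  then have "\<exists>f. is_coloring H (chi H) f" unfolding chi_def
    using LeastI_ex[of "\<lambda>n. \<exists>f. is_coloring H n f"] by blast
  then show ?thesis using col_mono assms(2) by blast
qed

lemma col_chi_le: "is_coloring H k f \<Longrightarrow> chi H \<le> k"
  unfolding chi_def by (rule Least_le) blast

lemma crit_not_col: "critical k G \<Longrightarrow> \<not> is_coloring G k f"
  unfolding critical_def using col_chi_le by fastforce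

lemma chi_eqI: assumes "is_coloring G (k+1) f" "\<forall>f. \<not> is_coloring G k f" shows "chi G = k+1"
  unfolding chi_def
proof (rule Least_equality)
  show "\<exists>f. is_coloring G (k+1) f" using assms by blast
  fix m assume "\<exists>f. is_coloring G m f"
  then show "k+1 \<le> m" using assms(2) col_mono by (metis not_less_eq_eq Suc_eq_plus1)
qed

lemma crit_remove_edge: assumes "critical k G" "e \<in> edges G"
  shows "\<exists>\<phi>. is_coloring (verts G, edges G - {e}) k \<phi>"
proof -
  have hg: "hypergraph G" using assms unfolding critical_def by auto
  have "hypergraph (verts G, edges G - {e})" using hg unfolding hypergraph_def by auto
  moreover have "(verts G, edges G - {e}) \<noteq> G" proof
    assume "(verts G, edges G - {e}) = G"
    then have "edges G - {e} = edges G" by (metis edges_pair)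
    then show False using assms(2) by blast
  qed
  ultimately have "chi (verts G, edges G - {e}) \<le> k" using assms(1) unfolding critical_def subhypergraph_def by auto
  then show ?thesis using chi_le_col \<open>hypergraph (verts G, edges G - {e})\<close> by blast
qed

lemma crit_no_isolated: assumes "critical k G" "1 \<le> k" "v \<in> verts G" shows "\<exists>e\<in>edges G. v \<in> e"
proof (rule ccontr)
  assume no: "\<not> (\<exists>e\<in>edges G. v \<in> e)"
  have hg: "hypergraph G" using assms unfolding critical_def by auto
  let ?H = "(verts G - {v}, edges G)"
  have "hypergraph ?H" using hg no unfolding hypergraph_def by auto
  moreover have "?H \<noteq> G" proof
    assume "?H = G"
    then have "verts G - {v} = verts G" by (metis verts_pair)
    then show False using assms(3) by blast
  qed
  ultimately have "chi ?H \<le> k" using assms(1) unfolding critical_def subhypergraph_def by auto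
  then obtain \<phi> where \<phi>: "is_coloring ?H k \<phi>" using chi_le_col \<open>hypergraph ?H\<close> by blast
  have "is_coloring G k (\<phi>(v := 1))"
    using \<phi> no assms(2) unfolding is_coloring_def
  proof (intro conjI ballI)
    show "(\<phi>(v := 1)) ` verts G \<subseteq> {1..k}" using \<phi> assms(2) unfolding is_coloring_def by auto
  next
    fix e assume e: "e \<in> edges G"
    then obtain x y where "x \<in> e" "y \<in> e" "\<phi> x \<noteq> \<phi> y" using \<phi> unfolding is_coloring_def by auto
    moreover have "x \<noteq> v" "y \<noteq> v" using no e \<open>x \<in> e\<close> \<open>y \<in> e\<close> by auto
    ultimately show "\<exists>x\<in>e. \<exists>y\<in>e. (\<phi>(v := 1)) x \<noteq> (\<phi>(v := 1)) y" by auto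
  qed
  then show False using crit_not_col[OF assms(1)] by blast
qed

lemma crit_mono_edge: assumes "critical k G" "et \<in> edges G"
  "is_coloring (verts G, edges G - {et}) k \<phi>" "x \<in> et" "y \<in> et"
  shows "\<phi> x = \<phi> y"
proof (rule ccontr)
  assume "\<phi> x \<noteq> \<phi> y"
  have img: "\<phi> ` verts G \<subseteq> {1..k}" using assms(3) unfolding is_coloring_def by simp
  have "\<forall>e\<in>edges G. \<exists>a\<in>e. \<exists>b\<in>e. \<phi> a \<noteq> \<phi> b"
  proof
    fix e assume e: "e \<in> edges G"
    show "\<exists>a\<in>e. \<exists>b\<in>e. \<phi> a \<noteq> \<phi> b"
    proof (cases "e = et")
      case True then show ?thesis using assms(4,5) \<open>\<phi> x \<noteq> \<phi> y\<close> by blast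
    next
      case False
      then have "e \<in> edges (verts G, edges G - {et})" using e by simp
      then show ?thesis using assms(3) unfolding is_coloring_def by blast
    qed
  qed
  then have "is_coloring G k \<phi>" using img unfolding is_coloring_def by blast
  then show False using crit_not_col[OF assms(1)] by blast
qed


lemma crit_from_edges:
  assumes hg: "hypergraph G" and nc: "\<forall>f. \<not> is_coloring G k f"
    and ni: "\<forall>v\<in>verts G. \<exists>e\<in>edges G. v \<in> e"
    and ec: "\<forall>e\<in>edges G. \<exists>\<phi>. is_coloring (verts G, edges G - {e}) k \<phi>"
    and ne: "edges G \<noteq> {}"
  shows "critical k G"
proof -
  obtain e where e: "e \<in> edges G" using ne by blast
  obtain \<phi> where \<phi>: "is_coloring (verts G, edges G - {e}) k \<phi>" using ec e by blast
  have "2 \<le> card e" using hg e unfolding hypergraph_def by auto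
  then obtain x where x: "x \<in> e" by (metis all_not_in_conv card.empty not_numeral_le_zero)
  have "is_coloring G (k+1) (\<phi>(x := k+1))"
    unfolding is_coloring_def
  proof (intro conjI ballI)
    show "(\<phi>(x := k+1)) ` verts G \<subseteq> {1..k+1}" using \<phi> unfolding is_coloring_def by auto
  next
    fix g assume g: "g \<in> edges G"
    show "\<exists>a\<in>g. \<exists>b\<in>g. (\<phi>(x := k+1)) a \<noteq> (\<phi>(x := k+1)) b"
    proof (cases "x \<in> g")
      case True
      have "2 \<le> card g" "g \<subseteq> verts G" "finite (verts G)" using hg g unfolding hypergraph_def by blast+
      then obtain y where y: "y \<in> g" "y \<noteq> x"
        using two_elems[of g x] True finite_subset by blast
      have "y \<in> verts G" using y \<open>g \<subseteq> verts G\<close> by blast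
      then have "\<phi> y \<in> {1..k}" using \<phi> unfolding is_coloring_def by auto
      then show ?thesis using True y by (intro bexI[of _ x] bexI[of _ y]) auto
    next
      case False
      then have "g \<noteq> e" using x by auto
      then have "g \<in> edges (verts G, edges G - {e})" using g by simp
      then obtain a b where ab: "a \<in> g" "b \<in> g" "\<phi> a \<noteq> \<phi> b" using \<phi> unfolding is_coloring_def by blast
      have "a \<noteq> x" "b \<noteq> x" using False ab by auto
      then show ?thesis using ab by (intro bexI[of _ a] bexI[of _ b]) auto
    qed
  qed
  then have chi: "chi G = k+1" using chi_eqI nc by blast
  have "chi H \<le> k" if H: "subhypergraph H G" "H \<noteq> G" for H
  proof (cases "edges H = edges G")
    case True
    then have "verts H \<noteq> verts G" using H(2) by (metis hg_eta)
    then obtain v where v: "v \<in> verts G" "v \<notin> verts H" using H(1) unfolding subhypergraph_def by auto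
    obtain g where "g \<in> edges G" "v \<in> g" using ni v by blast
    then have "g \<in> edges H" using True by auto
    then have "g \<subseteq> verts H" using H(1) unfolding subhypergraph_def hypergraph_def by auto
    then show ?thesis using v \<open>v \<in> g\<close> by auto
  next
    case False
    then obtain f where f: "f \<in> edges G" "f \<notin> edges H" using H(1) unfolding subhypergraph_def by auto
    obtain \<psi> where \<psi>: "is_coloring (verts G, edges G - {f}) k \<psi>" using ec f by blast
    have sub: "verts H \<subseteq> verts G" "edges H \<subseteq> edges G" using H(1) unfolding subhypergraph_def by blast+
    have img: "\<psi> ` verts G \<subseteq> {1..k}" using \<psi> unfolding is_coloring_def by simp
    have "is_coloring H k \<psi>" unfolding is_coloring_def
    proof (intro conjI ballI)
      show "\<psi> ` verts H \<subseteq> {1..k}" using img sub by blast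
    next
      fix g assume "g \<in> edges H"
      then have "g \<in> edges (verts G, edges G - {f})" using sub f by auto
      then show "\<exists>x\<in>g. \<exists>y\<in>g. \<psi> x \<noteq> \<psi> y" using \<psi> unfolding is_coloring_def by blast
    qed
    then show ?thesis by (rule col_chi_le)
  qed
  then show ?thesis unfolding critical_def using hg chi by blast
qed


definition nm :: "('a \<Rightarrow> nat) \<Rightarrow> 'a set \<Rightarrow> bool" where
  "nm \<phi> g \<longleftrightarrow> (\<exists>x\<in>g. \<exists>y\<in>g. \<phi> x \<noteq> \<phi> y)"

lemma is_col_nm: "is_coloring H k \<phi> \<longleftrightarrow> \<phi> ` verts H \<subseteq> {1..k} \<and> (\<forall>g\<in>edges H. nm \<phi> g)"
  unfolding is_coloring_def nm_def by auto

lemma nm_cong: "nm \<phi> g \<Longrightarrow> (\<forall>x\<in>g. \<psi> x = \<phi> x) \<Longrightarrow> nm \<psi> g"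
  unfolding nm_def by auto

lemma col_edge': "is_coloring (V, E - {f}) k \<phi> \<Longrightarrow> g \<in> E \<Longrightarrow> g \<noteq> f \<Longrightarrow> nm \<phi> g"
  unfolding is_col_nm by simp
lemma col_vert': "is_coloring (V, E) k \<phi> \<Longrightarrow> x \<in> V \<Longrightarrow> \<phi> x \<in> {1..k}"
  unfolding is_col_nm by auto
lemma col_img': "is_coloring (V, E) k \<phi> \<Longrightarrow> \<phi> ` V \<subseteq> {1..k}"
  unfolding is_col_nm by simp

lemma crit_antichain: assumes "critical k G" "g \<in> edges G" "h \<in> edges G" "g \<subseteq> h"
  shows "g = h"
proof (rule ccontr)
  assume ne: "g \<noteq> h"
  obtain \<phi> where \<phi>: "is_coloring (verts G, edges G - {h}) k \<phi>" using crit_remove_edge[OF assms(1,3)] by blast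
  then have "nm \<phi> g" using col_edge'[OF \<phi> assms(2) ne] by simp
  then have "nm \<phi> h" using assms(4) unfolding nm_def by blast
  have "\<forall>g\<in>edges G. nm \<phi> g"
  proof
    fix g assume "g \<in> edges G"
    then show "nm \<phi> g" using col_edge'[OF \<phi>, of g] \<open>nm \<phi> h\<close> by (cases "g = h") auto
  qed
  then have "is_coloring G k \<phi>" using col_img'[OF \<phi>] unfolding is_col_nm by simp
  then show False using crit_not_col[OF assms(1)] by blast
qed

theorem theorem17:
  fixes G1 G2 :: "'a hypergraph" and k :: nat and et :: "'a set" and vt :: 'a
    and s :: "'a set \<Rightarrow> 'a set"
  assumes "k \<ge> 2"
    and "critical k G1" and "critical k G2"
    and "verts G1 \<inter> verts G2 = {}"
    and "et \<in> edges G1" and "vt \<in> verts G2"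
    and "admissible et G2 vt s"
    and "\<forall>\<phi>. is_coloring (induced (split_hg G1 et G2 vt s) et) k \<phi> \<and> card (\<phi> ` et) \<ge> 2
           \<longrightarrow> (\<exists>\<phi>'. is_coloring (induced (split_hg G1 et G2 vt s) ((verts G2 - {vt}) \<union> et)) k \<phi>'
                    \<and> (\<forall>x\<in>et. \<phi>' x = \<phi> x))"
  shows "critical k (split_hg G1 et G2 vt s)"
proof -
  note k2 = assms(1) and c1 = assms(2) and c2 = assms(3) and disj0 = assms(4)
    and et1 = assms(5) and vt2 = assms(6) and adm = assms(7) and ext = assms(8)
  define G where "G = split_hg G1 et G2 vt s"
  define V1 where "V1 = verts G1"
  define E1 where "E1 = edges G1"
  define V2 where "V2 = verts G2"
  define E2 where "E2 = edges G2"
  define I where "I = incident G2 vt"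
  define N where "N = {(e - {vt}) \<union> s e | e. e \<in> I}"
  have vG: "verts G = V1 \<union> (V2 - {vt})" unfolding G_def split_hg_def V1_def V2_def by simp
  have eG: "edges G = (E1 - {et}) \<union> (E2 - I) \<union> N"
    unfolding G_def split_hg_def E1_def E2_def I_def N_def by simp
  have hg1: "hypergraph G1" using c1 critical_def by blast
  have hg2: "hypergraph G2" using c2 critical_def by blast
  have fin1: "finite V1" and E1p: "\<forall>g\<in>E1. g \<subseteq> V1 \<and> 2 \<le> card g"
    using hg1 unfolding hypergraph_def V1_def E1_def by auto
  have fin2: "finite V2" and E2p: "\<forall>g\<in>E2. g \<subseteq> V2 \<and> 2 \<le> card g"
    using hg2 unfolding hypergraph_def V2_def E2_def by auto
  have disj: "V1 \<inter> V2 = {}" using disj0 unfolding V1_def V2_def .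
  have et1': "et \<in> E1" using et1 unfolding E1_def .
  have etV1: "et \<subseteq> V1" using E1p et1' by auto
  have finet: "finite et" using etV1 fin1 finite_subset by auto
  have etne: "et \<noteq> {}" using E1p et1' by fastforce
  have I_def': "I = {e\<in>E2. vt \<in> e}" unfolding I_def incident_def E2_def by simp
  have sI: "\<forall>e\<in>I. s e \<noteq> {} \<and> s e \<subseteq> et" and sU: "(\<Union>e\<in>I. s e) = et"
    using adm unfolding admissible_def I_def by auto
  have Ip: "\<forall>e\<in>I. e \<subseteq> V2 \<and> vt \<in> e \<and> e - {vt} \<noteq> {} \<and> e \<in> E2"
  proof
    fix e assume e: "e \<in> I"
    then have "e \<subseteq> V2" "2 \<le> card e" "vt \<in> e" "e \<in> E2" using E2p I_def' by auto
    moreover have "e - {vt} \<noteq> {}"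
    proof
      assume "e - {vt} = {}"
      then have "e \<subseteq> {vt}" by auto
      then have "card e \<le> card {vt}" by (intro card_mono) auto
      then have "card e \<le> 1" by simp
      then show False using \<open>2 \<le> card e\<close> by simp
    qed
    ultimately show "e \<subseteq> V2 \<and> vt \<in> e \<and> e - {vt} \<noteq> {} \<and> e \<in> E2" by auto
  qed
  have k1: "1 \<le> k" using k2 by simp
  have W: "\<forall>g\<in>E2 - I. g \<subseteq> V2 - {vt}" using E2p I_def' by auto
  have inE1: "g \<in> edges G" if "g \<in> E1" "g \<noteq> et" for g using that unfolding eG by blast
  have inE2: "g \<in> edges G" if "g \<in> E2" "vt \<notin> g" for g
  proof -
    have "g \<notin> I" using that unfolding I_def' by blast
    then show ?thesis using that unfolding eG by blast
  qed
  have inN: "(e - {vt}) \<union> s e \<in> edges G" if "e \<in> I" for e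
  proof -
    have "(e - {vt}) \<union> s e \<in> N" unfolding N_def using that by blast
    then show ?thesis unfolding eG by blast
  qed
  have WN: "\<forall>e\<in>I. (e - {vt}) \<union> s e \<subseteq> (V2 - {vt}) \<union> et" using Ip sI by auto

  have nc: "\<not> is_coloring G k \<phi>" for \<phi>
  proof
    assume \<phi>: "is_coloring G k \<phi>"
    have img: "\<phi> ` (V1 \<union> (V2 - {vt})) \<subseteq> {1..k}" and eok: "\<forall>g\<in>edges G. nm \<phi> g"
      using \<phi> vG by (auto simp: is_col_nm)
    have mono: "\<forall>x\<in>et. \<forall>y\<in>et. \<phi> x = \<phi> y"
    proof (rule ccontr)
      assume "\<not> (\<forall>x\<in>et. \<forall>y\<in>et. \<phi> x = \<phi> y)"
      then have "nm \<phi> et" unfolding nm_def by auto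
      then have "is_coloring G1 k \<phi>" using img eok eG unfolding is_col_nm V1_def[symmetric] E1_def[symmetric]
        by auto
      then show False using crit_not_col[OF c1] by blast
    qed
    obtain x0 where x0: "x0 \<in> et" using etne by blast
    define c where "c = \<phi> x0"
    have cet: "\<forall>x\<in>et. \<phi> x = c" using mono x0 unfolding c_def by blast
    have "x0 \<in> V1 \<union> (V2 - {vt})" using x0 etV1 by blast
    then have ck: "c \<in> {1..k}" using img unfolding c_def by blast
    have "is_coloring G2 k (\<phi>(vt := c))"
      unfolding is_col_nm V2_def[symmetric] E2_def[symmetric]
    proof (intro conjI ballI)
      show "(\<phi>(vt := c)) ` V2 \<subseteq> {1..k}" using img ck by auto
    next
      fix g assume g: "g \<in> E2"
      show "nm (\<phi>(vt := c)) g"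
      proof (cases "vt \<in> g")
        case False
        then have "g \<in> edges G" using g eG I_def' by auto
        then have "nm \<phi> g" using eok by auto
        then show ?thesis by (rule nm_cong) (use False in auto)
      next
        case True
        then have gI: "g \<in> I" using g I_def' by auto
        then have "(g - {vt}) \<union> s g \<in> edges G" using eG N_def by auto
        then obtain x y where xy: "x \<in> (g - {vt}) \<union> s g" "y \<in> (g - {vt}) \<union> s g" "\<phi> x \<noteq> \<phi> y"
          using eok unfolding nm_def by blast
        have sc: "\<forall>z\<in>s g. \<phi> z = c" using sI gI cet by auto
        show ?thesis
        proof (cases "x \<in> g - {vt}")
          case xg: True
          show ?thesis
          proof (cases "y \<in> g - {vt}")
            case True then show ?thesis using xg xy unfolding nm_def by (intro bexI[of _ x] bexI[of _ y]) auto
          next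
            case False
            then have "\<phi> y = c" using xy sc by auto
            then show ?thesis using xg xy True unfolding nm_def by (intro bexI[of _ x] bexI[of _ vt]) auto
          qed
        next
          case xn: False
          then have "\<phi> x = c" using xy sc by auto
          then have "y \<in> g - {vt}" using xy sc by auto
          then show ?thesis using \<open>\<phi> x = c\<close> xy True unfolding nm_def by (intro bexI[of _ y] bexI[of _ vt]) auto
        qed
      qed
    qed
    then show False using crit_not_col[OF c2] by blast
  qed

  have comb: "\<exists>\<phi>. \<phi> ` verts G \<subseteq> {1..k} \<and> (\<forall>g\<in>E1 - {et}. nm \<phi> g)
      \<and> (\<forall>g\<in>E2 - I. nm \<phi>2 g \<longrightarrow> nm \<phi> g)
      \<and> (\<forall>e\<in>I. nm \<phi>2 e \<longrightarrow> nm \<phi> ((e - {vt}) \<union> s e))"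
    if \<phi>2: "\<phi>2 ` V2 \<subseteq> {1..k}" for \<phi>2
  proof -
    obtain \<phi>1 where \<phi>1: "is_coloring (V1, E1 - {et}) k \<phi>1"
      using crit_remove_edge[OF c1 et1] unfolding V1_def E1_def by blast
    obtain x0 where x0: "x0 \<in> et" using etne by blast
    define c where "c = \<phi>1 x0"
    have \<phi>1': "is_coloring (verts G1, edges G1 - {et}) k \<phi>1" using \<phi>1 unfolding V1_def E1_def .
    have cet: "\<forall>x\<in>et. \<phi>1 x = c" unfolding c_def
      using crit_mono_edge[OF c1 et1 \<phi>1' _ x0] by blast
    have "x0 \<in> V1" using x0 etV1 by blast
    then have ck: "c \<in> {1..k}" using \<phi>1 unfolding c_def is_coloring_def by auto
    define d where "d = \<phi>2 vt"
    have "vt \<in> V2" using vt2 V2_def by simp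
    then have dk: "d \<in> {1..k}" using \<phi>2 unfolding d_def by blast
    define \<sigma> where "\<sigma> = (\<lambda>z::nat. if z = c then d else if z = d then c else z)"
    have \<sigma>k: "\<forall>z\<in>{1..k}. \<sigma> z \<in> {1..k}" using ck dk \<sigma>_def by auto
    have \<sigma>inj: "\<sigma> a \<noteq> \<sigma> b" if "a \<noteq> b" for a b using that \<sigma>_def by auto
    define \<phi> where "\<phi> = (\<lambda>x. if x \<in> V1 then \<sigma> (\<phi>1 x) else \<phi>2 x)"
    have "\<phi> ` verts G \<subseteq> {1..k}"
    proof
      fix z assume "z \<in> \<phi> ` verts G"
      then obtain x where x: "x \<in> V1 \<union> (V2 - {vt})" "z = \<phi> x" using vG by auto
      show "z \<in> {1..k}"
      proof (cases "x \<in> V1")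
        case True
        then have "\<phi>1 x \<in> {1..k}" using col_vert'[OF \<phi>1] by simp
        then show ?thesis using x True \<sigma>k \<phi>_def by auto
      next
        case False then show ?thesis using x \<phi>2 \<phi>_def by auto
      qed
    qed
    moreover have "\<forall>g\<in>E1 - {et}. nm \<phi> g"
    proof
      fix g assume g: "g \<in> E1 - {et}"
      then have "nm \<phi>1 g" using col_edge'[OF \<phi>1] by blast
      then obtain a b where "a \<in> g" "b \<in> g" "\<phi>1 a \<noteq> \<phi>1 b" unfolding nm_def by blast
      moreover have "g \<subseteq> V1" using g E1p by auto
      ultimately show "nm \<phi> g" unfolding nm_def \<phi>_def using \<sigma>inj by (intro bexI[of _ a] bexI[of _ b]) auto
    qed
    moreover have "\<forall>g\<in>E2 - I. nm \<phi>2 g \<longrightarrow> nm \<phi> g"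
    proof (intro ballI impI)
      fix g assume g: "g \<in> E2 - I" "nm \<phi>2 g"
      have "g \<subseteq> V2" using g E2p by auto
      then have "\<forall>x\<in>g. \<phi> x = \<phi>2 x" using disj \<phi>_def by auto
      then show "nm \<phi> g" using g nm_cong by blast
    qed
    moreover have "\<forall>e\<in>I. nm \<phi>2 e \<longrightarrow> nm \<phi> ((e - {vt}) \<union> s e)"
    proof (intro ballI impI)
      fix e assume e: "e \<in> I" "nm \<phi>2 e"
      then obtain a b where ab: "a \<in> e" "b \<in> e" "\<phi>2 a \<noteq> \<phi>2 b" unfolding nm_def by auto
      have "\<exists>w\<in>e - {vt}. \<phi>2 w \<noteq> d"
      proof (cases "a = vt")
        case True then have "b \<noteq> vt" using ab by auto
        then show ?thesis using ab True d_def by (intro bexI[of _ b]) auto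
      next
        case False
        show ?thesis
        proof (cases "\<phi>2 a = d")
          case True then have "b \<noteq> vt" using ab d_def by auto
          then show ?thesis using ab True by (intro bexI[of _ b]) auto
        next
          case False then show ?thesis using ab \<open>a \<noteq> vt\<close> by (intro bexI[of _ a]) auto
        qed
      qed
      then obtain w where w: "w \<in> e - {vt}" "\<phi>2 w \<noteq> d" by blast
      obtain z where z: "z \<in> s e" using sI e by blast
      have "z \<in> V1" "\<phi>1 z = c" using z sI e etV1 cet by auto
      then have "\<phi> z = d" using \<phi>_def \<sigma>_def by auto
      moreover have "w \<notin> V1" using w Ip e disj by auto
      then have "\<phi> w = \<phi>2 w" using \<phi>_def by auto
      ultimately show "nm \<phi> ((e - {vt}) \<union> s e)" unfolding nm_def using w z
        by (intro bexI[of _ w] bexI[of _ z]) auto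
    qed
    ultimately show ?thesis by blast
  qed

  have ec: "\<forall>f\<in>edges G. \<exists>\<phi>. is_coloring (verts G, edges G - {f}) k \<phi>"
  proof
    fix f assume f: "f \<in> edges G"
    then consider (A) "f \<in> E1 - {et}" | (B) "f \<in> E2 - I" | (C) e0 where "e0 \<in> I" "f = (e0 - {vt}) \<union> s e0"
      using eG N_def by auto
    then show "\<exists>\<phi>. is_coloring (verts G, edges G - {f}) k \<phi>"
    proof cases
      case A
      obtain \<phi>1 where \<phi>1: "is_coloring (V1, E1 - {f}) k \<phi>1"
        using crit_remove_edge[OF c1, of f] A unfolding V1_def E1_def by auto
      have "nm \<phi>1 et" using col_edge'[OF \<phi>1 et1'] A by blast
      then obtain x y where xy: "x \<in> et" "y \<in> et" "\<phi>1 x \<noteq> \<phi>1 y" unfolding nm_def by auto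
      have "edges (induced G et) = {}"
      proof (rule ccontr)
        assume "edges (induced G et) \<noteq> {}"
        then obtain g where g: "g \<in> edges G" "g \<subseteq> et" unfolding induced_def by auto
        then consider (a) "g \<in> E1 - {et}" | (b) "g \<in> E2 - I" | (c) e where "e \<in> I" "g = (e - {vt}) \<union> s e"
          using eG N_def by auto
        then show False
        proof cases
          case a
          then have "g = et" using crit_antichain[OF c1, of g et] g et1 unfolding E1_def by auto
          then show False using a by auto
        next
          case b
          then have "g \<subseteq> V2" "g \<noteq> {}" using E2p by fastforce+
          then show False using g etV1 disj by blast
        next
          case c
          then have "e - {vt} \<subseteq> V2" "e - {vt} \<noteq> {}" using Ip by auto
          then show False using c g etV1 disj by blast
        qed
      qed
      then have ic: "is_coloring (induced G et) k \<phi>1"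
        using \<phi>1 etV1 unfolding is_col_nm induced_def by auto
      have "card {\<phi>1 x, \<phi>1 y} \<le> card (\<phi>1 ` et)"
        by (rule card_mono) (use xy finet in auto)
      then have "card (\<phi>1 ` et) \<ge> 2" using xy by simp
      then obtain \<phi>' where \<phi>': "is_coloring (induced G ((V2 - {vt}) \<union> et)) k \<phi>'"
        "\<forall>x\<in>et. \<phi>' x = \<phi>1 x"
        using ext ic unfolding G_def V2_def by blast
      have \<phi>'img: "\<phi>' ` ((V2 - {vt}) \<union> et) \<subseteq> {1..k}"
        and \<phi>'e: "\<forall>g\<in>edges G. g \<subseteq> (V2 - {vt}) \<union> et \<longrightarrow> nm \<phi>' g"
        using \<phi>'(1) unfolding is_col_nm induced_def by auto
      define \<phi> where "\<phi> = (\<lambda>x. if x \<in> V1 then \<phi>1 x else \<phi>' x)"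
      have agree: "\<forall>x\<in>g. \<phi> x = \<phi>' x" if "g \<subseteq> (V2 - {vt}) \<union> et" for g
        using that \<phi>'(2) disj \<phi>_def by auto
      have "is_coloring (verts G, edges G - {f}) k \<phi>"
        unfolding is_col_nm verts_pair edges_pair
      proof (intro conjI ballI)
        show "\<phi> ` verts G \<subseteq> {1..k}"
        proof
          fix z assume "z \<in> \<phi> ` verts G"
          then obtain x where x: "x \<in> V1 \<union> (V2 - {vt})" "z = \<phi> x" using vG by auto
          show "z \<in> {1..k}"
          proof (cases "x \<in> V1")
            case True then show ?thesis using x col_vert'[OF \<phi>1 True] \<phi>_def by simp
          next
            case False then show ?thesis using x \<phi>'img \<phi>_def by auto
          qed
        qed
      next
        fix g assume g: "g \<in> edges G - {f}"
        then consider (a) "g \<in> E1 - {et}" | (b) "g \<subseteq> (V2 - {vt}) \<union> et"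
        proof -
          assume a: "g \<in> E1 - {et} \<Longrightarrow> thesis" and b: "g \<subseteq> (V2 - {vt}) \<union> et \<Longrightarrow> thesis"
          have "g \<in> E1 - {et} \<or> g \<in> E2 - I \<or> (\<exists>e\<in>I. g = (e - {vt}) \<union> s e)" using g eG N_def by auto
          then show thesis using a b W WN by blast
        qed
        then show "nm \<phi> g"
        proof cases
          case a
          then have "nm \<phi>1 g" using g col_edge'[OF \<phi>1] by blast
          moreover have "g \<subseteq> V1" using a E1p by auto
          moreover have "\<forall>x\<in>g. \<phi> x = \<phi>1 x" using \<open>g \<subseteq> V1\<close> \<phi>_def by auto
          ultimately show ?thesis using nm_cong by blast
        next
          case b
          then have "nm \<phi>' g" using \<phi>'e g by auto
          then show ?thesis using nm_cong agree[OF b] by blast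
        qed
      qed
      then show ?thesis by blast
    next
      case B
      obtain \<phi>2 where \<phi>2: "is_coloring (V2, E2 - {f}) k \<phi>2"
        using crit_remove_edge[OF c2, of f] B unfolding V2_def E2_def by auto
      have "\<phi>2 ` V2 \<subseteq> {1..k}" using col_img'[OF \<phi>2] .
      from comb[OF this] obtain \<phi> where \<phi>: "\<phi> ` verts G \<subseteq> {1..k}" "\<forall>g\<in>E1 - {et}. nm \<phi> g"
        "\<forall>g\<in>E2 - I. nm \<phi>2 g \<longrightarrow> nm \<phi> g" "\<forall>e\<in>I. nm \<phi>2 e \<longrightarrow> nm \<phi> ((e - {vt}) \<union> s e)" by blast
      have "is_coloring (verts G, edges G - {f}) k \<phi>"
        unfolding is_col_nm verts_pair edges_pair
      proof (intro conjI ballI)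
        show "\<phi> ` verts G \<subseteq> {1..k}" by fact
      next
        fix g assume g: "g \<in> edges G - {f}"
        then consider (a) "g \<in> E1 - {et}" | (b) "g \<in> E2 - I" "g \<noteq> f" | (c) e where "e \<in> I" "g = (e - {vt}) \<union> s e"
          using eG N_def by auto
        then show "nm \<phi> g"
        proof cases
          case a then show ?thesis by (rule \<phi>(2)[rule_format])
        next
          case b then have "nm \<phi>2 g" using col_edge'[OF \<phi>2] by blast
          then show ?thesis by (rule \<phi>(3)[rule_format, OF b(1)])
        next
          case c
          have "e \<in> E2" "vt \<in> e" using Ip c(1) by blast+
          moreover have "vt \<notin> f" using B unfolding I_def' by blast
          ultimately have "e \<in> E2" "e \<noteq> f" by auto
          then have "nm \<phi>2 e" using col_edge'[OF \<phi>2] by blast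
          then show ?thesis unfolding c(2) by (rule \<phi>(4)[rule_format, OF c(1)])
        qed
      qed
      then show ?thesis by blast
    next
      case C
      have e0: "e0 \<in> E2" using C Ip by auto
      obtain \<phi>2 where \<phi>2: "is_coloring (V2, E2 - {e0}) k \<phi>2"
        using crit_remove_edge[OF c2, of e0] e0 unfolding V2_def E2_def by auto
      have "\<phi>2 ` V2 \<subseteq> {1..k}" using col_img'[OF \<phi>2] .
      from comb[OF this] obtain \<phi> where \<phi>: "\<phi> ` verts G \<subseteq> {1..k}" "\<forall>g\<in>E1 - {et}. nm \<phi> g"
        "\<forall>g\<in>E2 - I. nm \<phi>2 g \<longrightarrow> nm \<phi> g" "\<forall>e\<in>I. nm \<phi>2 e \<longrightarrow> nm \<phi> ((e - {vt}) \<union> s e)" by blast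
      have "is_coloring (verts G, edges G - {f}) k \<phi>"
        unfolding is_col_nm verts_pair edges_pair
      proof (intro conjI ballI)
        show "\<phi> ` verts G \<subseteq> {1..k}" by fact
      next
        fix g assume g: "g \<in> edges G - {f}"
        then consider (a) "g \<in> E1 - {et}" | (b) "g \<in> E2 - I" | (c) e where "e \<in> I" "g = (e - {vt}) \<union> s e"
          using eG N_def by auto
        then show "nm \<phi> g"
        proof cases
          case a then show ?thesis by (rule \<phi>(2)[rule_format])
        next
          case b
          then have "g \<noteq> e0" using C Ip by auto
          then have "nm \<phi>2 g" using b col_edge'[OF \<phi>2] by blast
          then show ?thesis by (rule \<phi>(3)[rule_format, OF b(1)])
        next
          case c
          then have "e \<noteq> e0" using C g by auto
          then have "nm \<phi>2 e" using c Ip col_edge'[OF \<phi>2] by blast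
          then show ?thesis unfolding c(2) by (rule \<phi>(4)[rule_format, OF c(1)])
        qed
      qed
      then show ?thesis by blast
    qed
  qed

  have ni: "\<forall>v\<in>verts G. \<exists>e\<in>edges G. v \<in> e"
  proof
    fix v assume "v \<in> verts G"
    then consider (a) "v \<in> V1" | (b) "v \<in> V2 - {vt}" using vG by auto
    then show "\<exists>e\<in>edges G. v \<in> e"
    proof cases
      case a
      then obtain g where g: "g \<in> E1" "v \<in> g" using crit_no_isolated[OF c1 k1] unfolding V1_def E1_def by auto
      show ?thesis
      proof (cases "g = et")
        case True
        then obtain e where e: "e \<in> I" "v \<in> s e" using sU g by auto
        then have "v \<in> (e - {vt}) \<union> s e" by simp
        then show ?thesis by (rule bexI[OF _ inN[OF e(1)]])
      next
        case False then show ?thesis using g inE1 by blast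
      qed
    next
      case b
      then obtain g where g: "g \<in> E2" "v \<in> g" using crit_no_isolated[OF c2 k1] unfolding V2_def E2_def by auto
      show ?thesis
      proof (cases "vt \<in> g")
        case True
        then have "g \<in> I" using g I_def' by auto
        have "v \<in> (g - {vt}) \<union> s g" using g(2) b by simp
        then show ?thesis by (rule bexI[OF _ inN[OF \<open>g \<in> I\<close>]])
      next
        case False
        then show ?thesis using inE2 g by blast
      qed
    qed
  qed

  have hg: "hypergraph G"
    unfolding hypergraph_def
  proof (intro conjI ballI)
    show "finite (verts G)" using vG fin1 fin2 by auto
    show "edges G \<subseteq> Pow (verts G)"
    proof
      fix g assume "g \<in> edges G"
      then consider (a) "g \<in> E1 - {et}" | (b) "g \<in> E2 - I" | (c) e where "e \<in> I" "g = (e - {vt}) \<union> s e"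
        using eG N_def by auto
      then show "g \<in> Pow (verts G)"
      proof cases
        case a then show ?thesis using E1p vG by auto
      next
        case b then show ?thesis using W vG by auto
      next
        case c then have "g \<subseteq> (V2 - {vt}) \<union> et" using WN by auto
        then show ?thesis using etV1 vG by auto
      qed
    qed
  next
    fix g assume "g \<in> edges G"
    then consider (a) "g \<in> E1 - {et}" | (b) "g \<in> E2 - I" | (c) e where "e \<in> I" "g = (e - {vt}) \<union> s e"
      using eG N_def by auto
    then show "2 \<le> card g"
    proof cases
      case a then show ?thesis using E1p by auto
    next
      case b then show ?thesis using E2p by auto
    next
      case c
      have ipe: "e \<subseteq> V2 \<and> vt \<in> e \<and> e - {vt} \<noteq> {} \<and> e \<in> E2" using Ip c(1) by (rule bspec)
      have spe: "s e \<noteq> {} \<and> s e \<subseteq> et" using sI c(1) by (rule bspec)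
      have sub1: "e - {vt} \<subseteq> V2" using ipe by blast
      have sub2: "s e \<subseteq> V1" using spe etV1 by blast
      have f1: "finite (e - {vt})" using finite_subset[OF sub1 fin2] .
      have f2: "finite (s e)" using finite_subset[OF sub2 fin1] .
      have dj: "(e - {vt}) \<inter> s e = {}" using sub1 sub2 disj by blast
      have "card g = card (e - {vt}) + card (s e)" unfolding c(2) using card_Un_disjoint[OF f1 f2 dj] .
      moreover have "card (e - {vt}) > 0" using f1 ipe card_gt_0_iff by blast
      moreover have "card (s e) > 0" using f2 spe card_gt_0_iff by blast
      ultimately show ?thesis by simp
    qed
  qed

  have ne: "edges G \<noteq> {}"
  proof -
    have "I \<noteq> {}" using sU etne by auto
    then obtain e where "e \<in> I" by blast
    then show ?thesis using inN by blast
  qed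

  have "critical k G" using crit_from_edges[OF hg _ ni ec ne] nc by blast
  then show ?thesis unfolding G_def .
qed

end
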